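(* Let $a/b$ be a rational number in lowest terms with $b\geq1$. Suppose $\zeta>0$ satisfies $\zeta\in\mathscr{L}$ and $\zeta^{a/b}\in\mathscr{L}$. Then for every $\eta>0$ the inequality $|q^b\zeta^a-p^b|\leq q^{-\eta}$ has a solution in coprime integers $p,q$ with $q\geq1$. Moreover, for fixed $\eta>b$, if $(p,q)$ is such a solution with $q$ sufficiently large, then $p^b/q^b$ is a convergent of the continued fraction expansion of $\zeta^a$.
   Context: $\mathscr{L}$ is the set of Liouville numbers (real irrational $\zeta$ such that for every $\eta>0$ there are infinitely many rationals $y/x$, $x\geq1$, with $|\zeta-y/x|\leq x^{-\eta}$). *)

theory Defs
  imports Complex_Main "HOL-Computational_Algebra.Primes"
begin

definition liouville :: "real \<Rightarrow> bool" where
  "liouville \<zeta> \<longleftrightarrow> \<zeta> \<notin> \<rat> \<and>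
     (\<forall>\<eta>>0. infinite {r :: rat. \<exists>x y :: int. x \<ge> 1 \<and> r = of_int y / of_int x \<and>
                 \<bar>\<zeta> - real_of_int y / real_of_int x\<bar> \<le> real_of_int x powr (-\<eta>)})"

fun cf_rem :: "real \<Rightarrow> nat \<Rightarrow> real" where
  "cf_rem x 0 = x"
| "cf_rem x (Suc n) = 1 / (cf_rem x n - of_int \<lfloor>cf_rem x n\<rfloor>)"

definition cf_digit :: "real \<Rightarrow> nat \<Rightarrow> int" where
  "cf_digit x n = \<lfloor>cf_rem x n\<rfloor>"

text \<open>Numerators p_n and denominators q_n of the convergents
  (p_(-1) = 1, p_(-2) = 0, q_(-1) = 0, q_(-2) = 1).\<close>
fun cf_num :: "real \<Rightarrow> nat \<Rightarrow> int" where
  "cf_num x 0 = cf_digit x 0"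
| "cf_num x (Suc 0) = cf_digit x 1 * cf_digit x 0 + 1"
| "cf_num x (Suc (Suc n)) = cf_digit x (Suc (Suc n)) * cf_num x (Suc n) + cf_num x n"

fun cf_den :: "real \<Rightarrow> nat \<Rightarrow> int" where
  "cf_den x 0 = 1"
| "cf_den x (Suc 0) = cf_digit x 1"
| "cf_den x (Suc (Suc n)) = cf_digit x (Suc (Suc n)) * cf_den x (Suc n) + cf_den x n"

text \<open>r is a convergent of the continued fraction of x: r = p_n/q_n for some n such that
  the expansion has not terminated before step n (x_k is not an integer for k < n).\<close>
definition is_convergent :: "real \<Rightarrow> real \<Rightarrow> bool" where
  "is_convergent x r \<longleftrightarrow> (\<exists>n. (\<forall>k<n. cf_rem x k \<notin> \<int>) \<and>
       r = real_of_int (cf_num x n) / real_of_int (cf_den x n))"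

end

theory Submission
  imports Defs
begin


fun PP :: "real \<Rightarrow> nat \<Rightarrow> int" where
  "PP x 0 = 0" | "PP x (Suc 0) = 1"
| "PP x (Suc (Suc n)) = cf_digit x n * PP x (Suc n) + PP x n"
fun QQ :: "real \<Rightarrow> nat \<Rightarrow> int" where
  "QQ x 0 = 1" | "QQ x (Suc 0) = 0"
| "QQ x (Suc (Suc n)) = cf_digit x n * QQ x (Suc n) + QQ x n"

lemma num_PP: "cf_num x n = PP x (Suc (Suc n))"
  by (induction x n rule: cf_num.induct) simp_all

lemma den_QQ: "cf_den x n = QQ x (Suc (Suc n))"
  by (induction x n rule: cf_den.induct) simp_all

lemma det_PQ: "PP x (Suc n) * QQ x n - PP x n * QQ x (Suc n) = (-1)^n"
proof (induction n)
  case 0 then show ?case by simp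
next
  case (Suc n) then show ?case by (simp add: algebra_simps)
qed

lemma rem_gt1:
  assumes "cf_rem x k \<notin> \<int>" shows "cf_rem x (Suc k) > 1"
proof -
  let ?r = "cf_rem x k"
  have "?r - of_int \<lfloor>?r\<rfloor> \<noteq> 0" using assms by (metis Ints_of_int eq_iff_diff_eq_0)
  moreover have "?r - of_int \<lfloor>?r\<rfloor> \<ge> 0" by simp
  moreover have "?r - of_int \<lfloor>?r\<rfloor> < 1" by linarith
  ultimately have "?r - of_int \<lfloor>?r\<rfloor> > 0" "?r - of_int \<lfloor>?r\<rfloor> < 1" by (auto simp: less_le)
  then show ?thesis by (simp add: less_divide_eq)
qed

lemma digit_ge1:
  assumes "cf_rem x k \<notin> \<int>" shows "cf_digit x (Suc k) \<ge> 1"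
  using rem_gt1[OF assms] unfolding cf_digit_def by linarith

lemma field_step:
  fixes s d P1 P0 Q1 Q0 :: real
  assumes "s \<noteq> 0"
  shows "((d + 1/s)*P1 + P0)/((d+1/s)*Q1+Q0) = (s*(d*P1+P0)+P1)/(s*(d*Q1+Q0)+Q1)"
proof -
  have a: "(d + 1/s)*P1 + P0 = (s*(d*P1+P0)+P1)/s" using assms by (simp add: field_simps)
  have b: "(d + 1/s)*Q1 + Q0 = (s*(d*Q1+Q0)+Q1)/s" using assms by (simp add: field_simps)
  show ?thesis unfolding a b using assms by simp
qed

lemma ident:
  assumes "\<forall>k<n. cf_rem x k \<notin> \<int>"
  shows "x = (cf_rem x n * PP x (Suc n) + PP x n) / (cf_rem x n * QQ x (Suc n) + QQ x n)"
  using assms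
proof (induction n)
  case 0 then show ?case by simp
next
  case (Suc n)
  let ?r = "cf_rem x n" and ?s = "cf_rem x (Suc n)" and ?d = "real_of_int (cf_digit x n)"
  have nz: "?r \<notin> \<int>" using Suc.prems by simp
  have s1: "?s > 1" using rem_gt1[OF nz] .
  have "?r - ?d \<noteq> 0" using nz unfolding cf_digit_def by (metis Ints_of_int eq_iff_diff_eq_0)
  hence rr: "?r = ?d + 1/?s" unfolding cf_digit_def by simp
  have "x = (?r * PP x (Suc n) + PP x n) / (?r * QQ x (Suc n) + QQ x n)"
    using Suc by simp
  also have "\<dots> = (?s*(?d*PP x (Suc n) + PP x n)+PP x (Suc n))/(?s*(?d*QQ x (Suc n)+QQ x n)+QQ x (Suc n))"
    unfolding rr by (rule field_step) (use s1 in auto)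
  finally show ?case by simp
qed

lemma QQ_bounds:
  assumes "\<forall>k<n. cf_rem x k \<notin> \<int>"
  shows "QQ x (Suc n) \<ge> 0 \<and> QQ x (Suc (Suc n)) \<ge> 1 \<and> QQ x (Suc (Suc n)) \<ge> int n
     \<and> (n \<ge> 1 \<longrightarrow> QQ x (Suc n) \<ge> 1)"
  using assms
proof (induction n)
  case 0 then show ?case by simp
next
  case (Suc n)
  have IH: "QQ x (Suc n) \<ge> 0 \<and> QQ x (Suc (Suc n)) \<ge> 1 \<and> QQ x (Suc (Suc n)) \<ge> int n
     \<and> (n \<ge> 1 \<longrightarrow> QQ x (Suc n) \<ge> 1)" using Suc by simp
  have d: "cf_digit x (Suc n) \<ge> 1" using digit_ge1 Suc.prems by simp
  have "cf_digit x (Suc n) * QQ x (Suc (Suc n)) \<ge> QQ x (Suc (Suc n))"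
    using d IH by (simp add: mult_le_cancel_right1)
  have e: "QQ x (Suc (Suc (Suc n))) = cf_digit x (Suc n) * QQ x (Suc (Suc n)) + QQ x (Suc n)"
    by simp
  show ?case
  proof (cases n)
    case 0 then show ?thesis using IH e \<open>cf_digit x (Suc n) * QQ x (Suc (Suc n)) \<ge> QQ x (Suc (Suc n))\<close>
      unfolding e using of_nat_Suc[of n, where 'a=int] by linarith
  next
    case (Suc m) then show ?thesis using IH e \<open>cf_digit x (Suc n) * QQ x (Suc (Suc n)) \<ge> QQ x (Suc (Suc n))\<close>
      unfolding e using of_nat_Suc[of n, where 'a=int] by linarith
  qed
qed



lemma finish:
  fixes A B P Q :: int and x :: real
  assumes "1 \<le> Q" "Q \<le> B" "\<bar>Q*x - P\<bar> \<le> \<bar>B*x - A\<bar>" "\<bar>x - A/B\<bar> < 1/(2*B^2)"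
  shows "real_of_int A / B = P / Q"
proof (rule ccontr)
  assume ne: "real_of_int A / B \<noteq> P / Q"
  have Bp: "real_of_int B > 0" "real_of_int Q > 0" using assms by auto
  have "A*Q - B*P \<noteq> 0"
  proof
    assume "A*Q - B*P = 0"
    hence "real_of_int A * Q = B * P" by (metis eq_iff_diff_eq_0 of_int_eq_iff of_int_mult)
    hence "real_of_int A / B = P / Q" using Bp by (simp add: field_simps)
    with ne show False by simp
  qed
  hence "\<bar>real_of_int (A*Q - B*P)\<bar> \<ge> 1" by linarith
  moreover have "real_of_int (A*Q - B*P) = Q*(A - B*x) + B*(Q*x - P)" by (simp add: algebra_simps)
  ultimately have "1 \<le> \<bar>Q*(A - B*x) + B*(Q*x - P)\<bar>" by simp
  also have "\<dots> \<le> Q*\<bar>A - B*x\<bar> + B*\<bar>Q*x - P\<bar>"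
    using Bp by (metis abs_mult abs_of_pos abs_triangle_ineq)
  also have "\<dots> \<le> Q*\<bar>B*x - A\<bar> + B*\<bar>B*x - A\<bar>"
    using Bp assms(3) by (simp add: abs_minus_commute)
  also have "\<dots> \<le> 2*B*\<bar>B*x - A\<bar>"
    using mult_right_mono[of "real_of_int Q" "real_of_int B" "\<bar>B*x - A\<bar>"] assms(2) by simp
  also have "\<bar>B*x - A\<bar> = B * \<bar>x - A/B\<bar>"
  proof -
    have "B*x - A = B*(x - A/B)" using Bp by (simp add: field_simps)
    thus ?thesis using Bp by (simp add: abs_mult)
  qed
  also have "2*B*(B*\<bar>x - A/B\<bar>) = (2*B*B)*\<bar>x - A/B\<bar>" by simp
  also have "\<dots> < (2*B*B)*(1/(2*B^2))"
    by (rule mult_strict_left_mono[OF assms(4)]) (use Bp in simp)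
  also have "\<dots> = 1" using Bp by (simp add: power2_eq_square)
  finally show False by simp
qed

lemma same_sign_abs: fixes u v :: real assumes "u*v \<ge> 0" shows "\<bar>u+v\<bar> \<ge> \<bar>u\<bar>"
  using assms by (auto simp: zero_le_mult_iff abs_if)

lemma lattice:
  fixes A B P0 Q0 P1 Q1 :: int and x :: real
  assumes D: "(P1*Q0 - P0*Q1)*(P1*Q0 - P0*Q1) = 1"
    and "1 \<le> Q0" "Q0 \<le> B" "B < Q1" and sg: "(Q0*x - P0)*(Q1*x - P1) \<le> 0"
  shows "\<bar>Q0*x - P0\<bar> \<le> \<bar>B*x - A\<bar> \<or> real_of_int A / B = P0 / Q0"
proof -
  define D where "D = P1*Q0 - P0*Q1"
  define \<alpha> where "\<alpha> = -(A*Q1 - B*P1)*D"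
  define \<beta> where "\<beta> = -(P0*B - Q0*A)*D"
  have "\<alpha>*P0 + \<beta>*P1 = A*(D*D)" unfolding \<alpha>_def \<beta>_def D_def by (simp add: algebra_simps)
  hence hA: "A = \<alpha>*P0 + \<beta>*P1" using D unfolding D_def by simp
  have "\<alpha>*Q0 + \<beta>*Q1 = B*(D*D)" unfolding \<alpha>_def \<beta>_def D_def by (simp add: algebra_simps)
  hence hB: "B = \<alpha>*Q0 + \<beta>*Q1" using D unfolding D_def by simp
  have BE: "B*x - A = \<alpha>*(Q0*x - P0) + \<beta>*(Q1*x - P1)"
    using hA hB by (simp add: algebra_simps)
  show ?thesis
  proof (cases "\<beta> = 0")
    case True
    hence "A = \<alpha>*P0" "B = \<alpha>*Q0" using hA hB by auto
    moreover have "\<alpha> \<noteq> 0" using \<open>B = \<alpha>*Q0\<close> assms by auto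
    ultimately show ?thesis by simp
  next
    case bn: False
    show ?thesis
    proof (cases "\<alpha> = 0")
      case True
      hence "B = \<beta>*Q1" using hB by simp
      hence "0 < \<beta>*Q1" using assms by linarith
      hence "\<beta> > 0" using assms by (simp add: zero_less_mult_iff)
      hence "\<beta>*Q1 \<ge> 1*Q1" using assms by (intro mult_right_mono) auto
      hence "B \<ge> Q1" using \<open>B = \<beta>*Q1\<close> by simp
      then show ?thesis using assms by simp
    next
      case an: False
      have "\<alpha>*\<beta> < 0"
      proof (rule ccontr)
        assume "\<not> \<alpha>*\<beta> < 0"
        hence "(\<alpha> > 0 \<and> \<beta> > 0) \<or> (\<alpha> < 0 \<and> \<beta> < 0)" using an bn
          by (metis linorder_neqE_linordered_idom mult_neg_pos mult_pos_neg)
        then show False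
        proof
          assume "\<alpha> > 0 \<and> \<beta> > 0"
          hence "\<alpha>*Q0 \<ge> Q0" "\<beta>*Q1 \<ge> Q1" using assms by auto
          thus False using hB assms by linarith
        next
          assume "\<alpha> < 0 \<and> \<beta> < 0"
          hence "\<alpha>*Q0 < 0" "\<beta>*Q1 < 0" using assms by (auto simp: mult_neg_pos)
          thus False using hB assms by linarith
        qed
      qed
      hence "real_of_int \<alpha> * \<beta> \<le> 0" by (metis of_int_mult of_int_le_0_iff less_imp_le)
      hence "(real_of_int \<alpha> * \<beta>) * ((Q0*x - P0)*(Q1*x - P1)) \<ge> 0"
        using sg by (rule mult_nonpos_nonpos)
      hence "(\<alpha>*(Q0*x - P0)) * (\<beta>*(Q1*x - P1)) \<ge> 0"
        by (simp add: algebra_simps)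
      hence "\<bar>B*x - A\<bar> \<ge> \<bar>\<alpha>*(Q0*x - P0)\<bar>" unfolding BE by (rule same_sign_abs)
      moreover have "\<bar>\<alpha>*(Q0*x - P0)\<bar> \<ge> \<bar>Q0*x - P0\<bar>"
        using an by (simp add: abs_mult mult_le_cancel_right1) linarith
      ultimately show ?thesis by simp
    qed
  qed
qed




lemma int_rem_conv:
  assumes "\<forall>k<n. cf_rem x k \<notin> \<int>" "cf_rem x n \<in> \<int>"
  shows "x = PP x (Suc (Suc n)) / QQ x (Suc (Suc n))"
proof -
  obtain k where k: "cf_rem x n = of_int k" using assms(2) by (auto elim: Ints_cases)
  have d: "cf_digit x n = k" unfolding cf_digit_def k by simp
  have "x = (cf_rem x n * PP x (Suc n) + PP x n) / (cf_rem x n * QQ x (Suc n) + QQ x n)"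
    using ident[OF assms(1)] .
  also have "\<dots> = PP x (Suc (Suc n)) / QQ x (Suc (Suc n))" by (simp add: k d)
  finally show ?thesis .
qed

lemma sq_one: "(t::int) = (-1)^m \<Longrightarrow> t*t = 1"
  by (simp add: power_mult_distrib[symmetric])

lemma legendre:
  fixes A B :: int and x :: real
  assumes B1: "B \<ge> 1" and close: "\<bar>x - A/B\<bar> < 1/(2*B^2)"
  shows "is_convergent x (A/B)"
proof -
  define S where "S = {n. (\<forall>k<n. cf_rem x k \<notin> \<int>) \<and> QQ x (Suc (Suc n)) \<le> B}"
  have "0 \<in> S" unfolding S_def using B1 by simp
  have "S \<subseteq> {..nat B}"
  proof
    fix n assume "n \<in> S"
    hence "int n \<le> B" unfolding S_def using QQ_bounds[of n x] by force
    thus "n \<in> {..nat B}" by simp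
  qed
  hence fin: "finite S" by (rule finite_subset) simp
  define n where "n = Max S"
  have nS: "n \<in> S" unfolding n_def using fin \<open>0 \<in> S\<close> by (intro Max_in) auto
  have valid: "\<forall>k<n. cf_rem x k \<notin> \<int>" and QB: "QQ x (Suc (Suc n)) \<le> B"
    using nS unfolding S_def by auto
  have Q1: "QQ x (Suc (Suc n)) \<ge> 1" using QQ_bounds[OF valid] by simp
  define P0 where "P0 = PP x (Suc (Suc n))"
  define Q0 where "Q0 = QQ x (Suc (Suc n))"
  have Q01: "Q0 \<ge> 1" unfolding Q0_def by (rule Q1)
  have QB0: "Q0 \<le> B" unfolding Q0_def by (rule QB)
  have claim: "\<bar>Q0*x - P0\<bar> \<le> \<bar>B*x - A\<bar> \<or> real_of_int A / B = P0 / Q0"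
  proof (cases "cf_rem x n \<in> \<int>")
    case True
    have "x = P0 / Q0" using int_rem_conv[OF valid True] unfolding P0_def Q0_def .
    hence "Q0*x - P0 = 0" using Q01 by simp
    thus ?thesis by simp
  next
    case False
    have valid1: "\<forall>k<Suc n. cf_rem x k \<notin> \<int>" using valid False less_Suc_eq by auto
    have "Suc n \<notin> S" using fin n_def Max_ge by (metis Suc_n_not_le_n)
    hence QB1: "QQ x (Suc (Suc (Suc n))) > B" using valid1 unfolding S_def by auto
    define P1 where "P1 = PP x (Suc (Suc (Suc n)))"
    define Q1' where "Q1' = QQ x (Suc (Suc (Suc n)))"
    have sg: "(Q0*x - P0)*(Q1'*x - P1) \<le> 0"
    proof (cases "cf_rem x (Suc n) \<in> \<int>")
      case True
      have "x = P1 / Q1'" using int_rem_conv[OF valid1 True] unfolding P1_def Q1'_def .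
      moreover have "Q1' \<ge> 1" using QB1 B1 unfolding Q1'_def by simp
      ultimately have "Q1'*x - P1 = 0" by simp
      thus ?thesis by simp
    next
      case F2: False
      have valid2: "\<forall>k<Suc (Suc n). cf_rem x k \<notin> \<int>" using valid1 F2 less_Suc_eq by auto
      define s where "s = cf_rem x (Suc (Suc n))"
      have s1: "s > 1" unfolding s_def using rem_gt1[OF F2] .
      have xe: "x = (s * P1 + P0) / (s * Q1' + Q0)"
        using ident[OF valid2] unfolding s_def P1_def P0_def Q1'_def Q0_def .
      have "Q1' \<ge> 1" using QB1 B1 unfolding Q1'_def by simp
      hence "s * Q1' \<ge> 1 * 1" using s1 by (intro mult_mono) auto
      hence pos: "s * Q1' + Q0 > 0" using Q01 by linarith
      have "x * (s * Q1' + Q0) = s * P1 + P0" using xe pos by (simp add: field_simps)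
      hence "Q0*x - P0 = - s * (Q1'*x - P1)" by (simp add: algebra_simps)
      hence "(Q0*x - P0)*(Q1'*x - P1) = - s * (Q1'*x - P1)^2" by (simp add: power2_eq_square)
      thus ?thesis using s1 by simp
    qed
    have D: "(P1*Q0 - P0*Q1')*(P1*Q0 - P0*Q1') = 1"
      using det_PQ[of x "Suc (Suc n)"] unfolding P1_def Q0_def P0_def Q1'_def
      by (rule sq_one)
    show ?thesis
      by (rule lattice[OF D]) (use Q01 QB0 QB1 sg in \<open>auto simp: Q1'_def\<close>)
  qed
  have "real_of_int A / B = P0 / Q0"
    using claim
  proof
    assume "\<bar>Q0*x - P0\<bar> \<le> \<bar>B*x - A\<bar>"
    thus ?thesis using finish[of Q0 B x P0 A] Q01 QB0 close by simp
  qed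
  thus ?thesis unfolding is_convergent_def using valid
    by (auto simp: num_PP den_QQ P0_def Q0_def)
qed



lemma part2:
  fixes X :: real and b :: nat
  assumes "b \<ge> 1"
  shows "\<forall>\<eta>>real b. \<exists>Q. \<forall>p q :: int. coprime p q \<and> q \<ge> 1 \<and> real_of_int q \<ge> Q \<and>
            \<bar>real_of_int q ^ b * X - real_of_int p ^ b\<bar> \<le> real_of_int q powr (-\<eta>)
            \<longrightarrow> is_convergent X (real_of_int p ^ b / real_of_int q ^ b)"
proof (intro allI impI)
  fix \<eta> :: real assume eb: "\<eta> > real b"
  define Q where "Q = (3::real) powr (1/(\<eta> - b))"
  show "\<exists>Q. \<forall>p q :: int. coprime p q \<and> q \<ge> 1 \<and> real_of_int q \<ge> Q \<and>
            \<bar>real_of_int q ^ b * X - real_of_int p ^ b\<bar> \<le> real_of_int q powr (-\<eta>)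
            \<longrightarrow> is_convergent X (real_of_int p ^ b / real_of_int q ^ b)"
  proof (intro exI[of _ Q] allI impI, elim conjE)
    fix p q :: int
    assume q1: "q \<ge> 1" and qQ: "real_of_int q \<ge> Q"
      and E: "\<bar>real_of_int q ^ b * X - real_of_int p ^ b\<bar> \<le> real_of_int q powr (-\<eta>)"
    define r where "r = real_of_int q"
    have r1: "r \<ge> 1" using q1 unfolding r_def by simp
    have "r powr (\<eta> - b) \<ge> Q powr (\<eta> - b)"
      using qQ eb unfolding r_def Q_def by (intro powr_mono2) auto
    moreover have "Q powr (\<eta> - b) = 3" unfolding Q_def powr_powr using eb by simp
    ultimately have r3: "r powr (\<eta> - b) \<ge> 3" by simp
    have "r powr \<eta> = r powr (\<eta> - b) * r powr (real b)"
      by (simp add: powr_add[symmetric])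
    also have "r powr (real b) = r ^ b" using r1 by (simp add: powr_realpow)
    finally have "r powr \<eta> \<ge> 3 * r ^ b" using r3 r1 by (simp add: mult_right_mono)
    have rb: "r ^ b \<ge> 1" using r1 by simp
    have "\<bar>X - real_of_int p ^ b / r ^ b\<bar> = \<bar>r ^ b * X - real_of_int p ^ b\<bar> / r ^ b"
    proof -
      have "X - real_of_int p ^ b / r ^ b = (r ^ b * X - real_of_int p ^ b) / r ^ b"
      proof -
        have "r ^ b \<noteq> 0" using rb by linarith
        thus ?thesis by (simp add: diff_divide_distrib)
      qed
      thus ?thesis using rb by simp
    qed
    also have "\<dots> \<le> r powr (-\<eta>) / r ^ b"
      using E rb unfolding r_def by (simp add: divide_right_mono)
    also have "r powr (-\<eta>) = 1 / r powr \<eta>" by (simp add: powr_minus_divide)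
    also have "1 / r powr \<eta> / r ^ b \<le> 1 / (3 * r ^ b) / r ^ b"
      using \<open>r powr \<eta> \<ge> 3 * r ^ b\<close> rb by (intro divide_right_mono divide_left_mono) (auto intro!: mult_pos_pos)
    also have "\<dots> < 1 / (2 * (r ^ b)^2)" using rb by (simp add: field_simps power2_eq_square)
    finally have cl: "\<bar>X - real_of_int (p ^ b) / real_of_int (q ^ b)\<bar> < 1 / (2 * (real_of_int (q ^ b))^2)"
      unfolding r_def by simp
    have "q ^ b \<ge> 1" using q1 by simp
    then show "is_convergent X (real_of_int p ^ b / real_of_int q ^ b)"
      using legendre[of "q ^ b" X "p ^ b"] cl by simp
  qed
qed



lemma pow_diff_bound:
  fixes u v M :: real
  assumes "\<bar>u\<bar> \<le> M" "\<bar>v\<bar> \<le> M"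
  shows "\<bar>u^Suc n - v^Suc n\<bar> \<le> Suc n * M^n * \<bar>u - v\<bar>"
proof (induction n)
  case 0 then show ?case by simp
next
  case (Suc n)
  have M0: "M \<ge> 0" using assms by linarith
  have "u^Suc (Suc n) - v^Suc (Suc n) = u*(u^Suc n - v^Suc n) + v^Suc n*(u - v)"
    by (simp add: algebra_simps)
  hence "\<bar>u^Suc (Suc n) - v^Suc (Suc n)\<bar> \<le> \<bar>u\<bar>*\<bar>u^Suc n - v^Suc n\<bar> + \<bar>v\<bar>^Suc n*\<bar>u - v\<bar>"
    by (metis abs_mult abs_triangle_ineq power_abs)
  also have "\<dots> \<le> M*(Suc n * M^n * \<bar>u - v\<bar>) + M^Suc n*\<bar>u - v\<bar>"
    using Suc assms M0
    by (intro add_mono mult_mono power_mono) auto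
  also have "\<dots> = Suc (Suc n) * M^Suc n * \<bar>u - v\<bar>" by (simp add: algebra_simps)
  finally show ?case .
qed

lemma part1:
  fixes \<theta> :: real and b :: nat
  assumes b1: "b \<ge> 1" and th0: "\<theta> > 0" and L: "liouville \<theta>"
  shows "\<forall>\<eta>>0. \<exists>p q :: int. coprime p q \<and> q \<ge> 1 \<and>
            \<bar>real_of_int q ^ b * \<theta> ^ b - real_of_int p ^ b\<bar> \<le> real_of_int q powr (-\<eta>)"
proof (intro allI impI)
  fix \<eta> :: real assume e0: "\<eta> > 0"
  define M where "M = \<theta> + 1"
  define C where "C = real b * M^(b - 1)"
  define K where "K = nat \<lceil>C\<rceil>"
  define \<mu> where "\<mu> = \<eta> + real b + 1"
  define N where "N = \<lceil>M * real K\<rceil>"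
  define F where "F = {r::rat. \<bar>real_of_rat r\<bar> \<le> M \<and> snd (quotient_of r) \<le> int K}"
  define LL where "LL = {r :: rat. \<exists>x y :: int. x \<ge> 1 \<and> r = of_int y / of_int x \<and>
                 \<bar>\<theta> - real_of_int y / real_of_int x\<bar> \<le> real_of_int x powr (-\<mu>)}"
  have C0: "C \<ge> 0" unfolding C_def M_def using th0 by simp
  have mu0: "\<mu> > 0" unfolding \<mu>_def using e0 by simp
  have infL: "infinite LL" using L mu0 unfolding liouville_def LL_def by blast
  have "F \<subseteq> (\<lambda>(p,q). of_int p / of_int q) ` ({-N..N} \<times> {1..int K})"
  proof
    fix r assume rF: "r \<in> F"
    obtain p q where qo: "quotient_of r = (p, q)" by (cases "quotient_of r")
    have q0: "q > 0" using quotient_of_denom_pos[OF qo] .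
    have rpq: "r = of_int p / of_int q" using quotient_of_div[OF qo] .
    have qK: "q \<le> int K" using rF qo unfolding F_def by simp
    have "real_of_rat r = real_of_int p / real_of_int q" unfolding rpq
      by (simp add: of_rat_divide)
    hence "real_of_int p = real_of_rat r * q" using q0 by simp
    hence "\<bar>real_of_int p\<bar> = \<bar>real_of_rat r\<bar> * q" using q0 by (simp add: abs_mult)
    also have "\<dots> \<le> M * real K" using rF q0 qK unfolding F_def
      by (intro mult_mono) (use th0 in \<open>auto simp: M_def\<close>)
    finally have "\<bar>p\<bar> \<le> N" unfolding N_def by linarith
    hence "(p, q) \<in> {-N..N} \<times> {1..int K}" using q0 qK by auto
    thus "r \<in> (\<lambda>(p,q). of_int p / of_int q) ` ({-N..N} \<times> {1..int K})"
      using rpq by force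
  qed
  hence finF: "finite F" by (rule finite_subset) simp
  have "infinite (LL - F)" by (rule Diff_infinite_finite[OF finF infL])
  then obtain r where "r \<in> LL" "r \<notin> F" by (metis Diff_iff infinite_imp_nonempty ex_in_conv)
  then obtain x y :: int where x1: "x \<ge> 1" and rxy: "r = of_int y / of_int x"
    and app: "\<bar>\<theta> - real_of_int y / real_of_int x\<bar> \<le> real_of_int x powr (-\<mu>)"
    unfolding LL_def by blast
  obtain p q where qo: "quotient_of r = (p, q)" by (cases "quotient_of r")
  have q0: "q > 0" using quotient_of_denom_pos[OF qo] .
  have cop: "coprime p q" using quotient_of_coprime[OF qo] .
  have rpq: "r = of_int p / of_int q" using quotient_of_div[OF qo] .
  have eq: "real_of_int p / real_of_int q = real_of_int y / real_of_int x"
  proof -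
    have "real_of_rat r = real_of_int p / real_of_int q" unfolding rpq by (simp add: of_rat_divide)
    moreover have "real_of_rat r = real_of_int y / real_of_int x" unfolding rxy by (simp add: of_rat_divide)
    ultimately show ?thesis by simp
  qed
  have "real_of_int (p * x) = real_of_int (y * q)" using eq q0 x1 by (simp add: field_simps)
  hence pxyq: "p * x = y * q" by linarith
  have "q dvd p * x" unfolding pxyq by simp
  hence "q dvd x" using cop by (simp add: coprime_dvd_mult_right_iff coprime_commute)
  hence qx: "q \<le> x" using x1 by (intro zdvd_imp_le) auto
  have "real_of_int x powr (-\<mu>) \<le> real_of_int q powr (-\<mu>)"
    using qx q0 mu0 by (intro powr_mono2') auto
  with app eq have app2: "\<bar>\<theta> - real_of_int p / real_of_int q\<bar> \<le> real_of_int q powr (-\<mu>)" by simp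
  have "real_of_int x powr (-\<mu>) \<le> real_of_int x powr 0"
    using x1 mu0 by (intro powr_mono) auto
  hence "real_of_int x powr (-\<mu>) \<le> 1" using x1 by simp
  hence "\<bar>\<theta> - real_of_int p / real_of_int q\<bar> \<le> 1" using app eq by simp
  hence vM: "\<bar>real_of_int p / real_of_int q\<bar> \<le> M" unfolding M_def using th0 by linarith
  have uM: "\<bar>\<theta>\<bar> \<le> M" unfolding M_def using th0 by simp
  have "real_of_rat r = real_of_int p / real_of_int q" unfolding rpq by (simp add: of_rat_divide)
  hence "\<bar>real_of_rat r\<bar> \<le> M" using vM by (simp only:)
  hence "\<not> snd (quotient_of r) \<le> int K" using \<open>r \<notin> F\<close> unfolding F_def by blast
  hence "snd (quotient_of r) > int K" by linarith
  hence qK: "q > int K" using qo by simp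
  have qC: "real_of_int q \<ge> C"
  proof -
    have "real_of_int q \<ge> real K" using qK by linarith
    moreover have "real K \<ge> C" unfolding K_def by linarith
    ultimately show ?thesis by linarith
  qed
  define qr where "qr = real_of_int q"
  define v where "v = real_of_int p / real_of_int q"
  have qr0: "qr > 0" unfolding qr_def using q0 by simp
  have bS: "b = Suc (b - 1)" using b1 by simp
  have db: "\<bar>\<theta>^b - v^b\<bar> \<le> C * \<bar>\<theta> - v\<bar>"
    using pow_diff_bound[OF uM vM[folded v_def], of "b - 1"] bS unfolding C_def
    by (metis of_nat_Suc)
  have pb: "real_of_int p ^ b = qr^b * v^b" unfolding v_def qr_def using q0
    by (simp add: power_divide)
  have "\<bar>qr ^ b * \<theta> ^ b - real_of_int p ^ b\<bar> = qr^b * \<bar>\<theta>^b - v^b\<bar>"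
    unfolding pb using qr0 by (simp add: abs_mult right_diff_distrib[symmetric])
  also have "\<dots> \<le> qr^b * (C * qr powr (-\<mu>))"
    using db app2 C0 qr0 unfolding v_def qr_def
    by (intro mult_left_mono) (auto intro: order.trans mult_left_mono)
  also have "qr^b * (C * qr powr (-\<mu>)) = C * (qr powr real b * qr powr (-\<mu>))"
    using qr0 by (simp add: powr_realpow)
  also have "qr powr real b * qr powr (-\<mu>) = qr powr (-\<eta>) * qr powr (-1)"
    unfolding powr_add[symmetric] \<mu>_def by (simp add: algebra_simps)
  also have "C * (qr powr (-\<eta>) * qr powr (-1)) = (C / qr) * qr powr (-\<eta>)"
    using qr0 by (simp add: powr_minus_divide)
  also have "\<dots> \<le> 1 * qr powr (-\<eta>)"
    using qC qr0 C0 unfolding qr_def by (intro mult_right_mono) auto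
  finally show "\<exists>p q :: int. coprime p q \<and> q \<ge> 1 \<and>
            \<bar>real_of_int q ^ b * \<theta> ^ b - real_of_int p ^ b\<bar> \<le> real_of_int q powr (-\<eta>)"
    using cop q0 unfolding qr_def by (intro exI[of _ p] exI[of _ q]) auto
qed


theorem lemma6p4:
  fixes a :: int and b :: nat and \<zeta> :: real
  assumes "b \<ge> 1" and "coprime a (int b)"
    and "\<zeta> > 0" and "liouville \<zeta>" and "liouville (\<zeta> powr (real_of_int a / real b))"
  shows "(\<forall>\<eta>>0. \<exists>p q :: int. coprime p q \<and> q \<ge> 1 \<and>
            \<bar>real_of_int q ^ b * \<zeta> powr real_of_int a - real_of_int p ^ b\<bar>
              \<le> real_of_int q powr (-\<eta>))
       \<and> (\<forall>\<eta>>real b. \<exists>Q. \<forall>p q :: int. coprime p q \<and> q \<ge> 1 \<and> real_of_int q \<ge> Q \<and>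
            \<bar>real_of_int q ^ b * \<zeta> powr real_of_int a - real_of_int p ^ b\<bar>
              \<le> real_of_int q powr (-\<eta>)
            \<longrightarrow> is_convergent (\<zeta> powr real_of_int a) (real_of_int p ^ b / real_of_int q ^ b))"
proof
  define \<theta> where "\<theta> = \<zeta> powr (real_of_int a / real b)"
  have th0: "\<theta> > 0" unfolding \<theta>_def using assms(3) by simp
  have "\<theta> ^ b = \<theta> powr real b" using th0 by (simp add: powr_realpow)
  also have "\<dots> = \<zeta> powr real_of_int a" unfolding \<theta>_def powr_powr using assms(1) by simp
  finally have thb: "\<theta> ^ b = \<zeta> powr real_of_int a" .
  show "\<forall>\<eta>>0. \<exists>p q :: int. coprime p q \<and> q \<ge> 1 \<and>
            \<bar>real_of_int q ^ b * \<zeta> powr real_of_int a - real_of_int p ^ b\<bar>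
              \<le> real_of_int q powr (-\<eta>)"
    using part1[OF assms(1) th0 assms(5)[folded \<theta>_def]] unfolding thb .
  show "\<forall>\<eta>>real b. \<exists>Q. \<forall>p q :: int. coprime p q \<and> q \<ge> 1 \<and> real_of_int q \<ge> Q \<and>
            \<bar>real_of_int q ^ b * \<zeta> powr real_of_int a - real_of_int p ^ b\<bar>
              \<le> real_of_int q powr (-\<eta>)
            \<longrightarrow> is_convergent (\<zeta> powr real_of_int a) (real_of_int p ^ b / real_of_int q ^ b)"
    by (rule part2[OF assms(1)])
qed

end
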